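(* Let $m \ge 4$ and $n \ge 3$ be integers and let $d$ be a positive integer. Then there exists a matrix $A \in \mathbb{R}^{[m]\times[n]}$ such that (i) $A$ does not have an elimination ordering, and (ii) for every vector $b \in \mathbb{R}^{[m]}$, the solution graph $G(R(A,b))$ is connected.
   Context: Fix a positive integer $d$ and let $D=\{0,1,\dots,d\}$; $[n]=\{1,\dots,n\}$. For $A\in\mathbb{R}^{[m]\times[n]}$ and $b\in\mathbb{R}^{[m]}$, $R(A,b)=\{x\in D^{[n]} : Ax\ge b\}$ is the set of feasible solutions of the integer linear system $(A,b)$. For $R\subseteq D^{[n]}$, the solution graph $G(R)$ is the undirected graph with vertex set $R$ in which $x,y$ are adjacent iff they differ in exactly one coordinate (Hamming distance $1$). A matrix $A=(a_{ij})$ with column index set $J$ can be eliminated at column $j\in J$ if (i) for every row $i$ with $a_{ij}>0$ we have $a_{ij'}=0$ for all $j'\in J\setminus\{j\}$, or (ii) for every row $i$ with $a_{ij}<0$ we have $a_{ij'}=0$ for all $j'\in J\setminus\{j\}$. For $J'\subseteq [n]$, $\mathrm{elm}(A,J')$ denotes the submatrix of $A$ obtained by deleting the columns indexed by $J'$. A sequence $(j_1,\dots,j_n)$ of the elements of $[n]$ is an elimination ordering (EO) of $A\in\mathbb{R}^{[m]\times[n]}$ if for every $t\in[n]$ the matrix $\mathrm{elm}(A,\{j_1,\dots,j_{t-1}\})$ can be eliminated at column $j_t$. *)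

theory Defs
  imports Complex_Main
begin

text \<open>Matrices A in R^{[m] x [n]} are functions nat => nat => real, read only on
  rows 1..m and columns 1..n; vectors b are nat => real read on 1..m.
  Points of D^{[n]} (D = {0..d}) are functions nat => int with values in
  {0..d} on 1..n and 0 outside (so that the representation is unique).\<close>

definition box :: "nat \<Rightarrow> nat \<Rightarrow> (nat \<Rightarrow> int) set" where
  "box d n = {x. (\<forall>j\<in>{1..n}. 0 \<le> x j \<and> x j \<le> int d) \<and> (\<forall>j. j \<notin> {1..n} \<longrightarrow> x j = 0)}"

definition feasible_set ::
  "nat \<Rightarrow> nat \<Rightarrow> nat \<Rightarrow> (nat \<Rightarrow> nat \<Rightarrow> real) \<Rightarrow> (nat \<Rightarrow> real) \<Rightarrow> (nat \<Rightarrow> int) set" where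
  "feasible_set d m n A b =
     {x \<in> box d n. \<forall>i\<in>{1..m}. (\<Sum>j=1..n. A i j * of_int (x j)) \<ge> b i}"

definition hamming_adj :: "nat \<Rightarrow> (nat \<Rightarrow> int) \<Rightarrow> (nat \<Rightarrow> int) \<Rightarrow> bool" where
  "hamming_adj n x y \<longleftrightarrow> card {j \<in> {1..n}. x j \<noteq> y j} = 1"

definition solution_graph_connected :: "nat \<Rightarrow> (nat \<Rightarrow> int) set \<Rightarrow> bool" where
  "solution_graph_connected n R \<longleftrightarrow>
     (\<forall>x\<in>R. \<forall>y\<in>R. (\<lambda>u v. u \<in> R \<and> v \<in> R \<and> hamming_adj n u v)\<^sup>*\<^sup>* x y)"

definition can_eliminate :: "nat \<Rightarrow> (nat \<Rightarrow> nat \<Rightarrow> real) \<Rightarrow> nat set \<Rightarrow> nat \<Rightarrow> bool" where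
  "can_eliminate m A J j \<longleftrightarrow>
     (\<forall>i\<in>{1..m}. A i j > 0 \<longrightarrow> (\<forall>j'\<in>J - {j}. A i j' = 0)) \<or>
     (\<forall>i\<in>{1..m}. A i j < 0 \<longrightarrow> (\<forall>j'\<in>J - {j}. A i j' = 0))"

text \<open>js = (j_1,...,j_n) is an elimination ordering of A in R^{[m] x [n]}:
  elm(A,{j_1..j_{t-1}}) has column set [n] - {j_1..j_{t-1}}.\<close>
definition elimination_ordering :: "nat \<Rightarrow> nat \<Rightarrow> (nat \<Rightarrow> nat \<Rightarrow> real) \<Rightarrow> nat list \<Rightarrow> bool" where
  "elimination_ordering m n A js \<longleftrightarrow>
     distinct js \<and> set js = {1..n} \<and>
     (\<forall>t < n. can_eliminate m A ({1..n} - set (take t js)) (js ! t))"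

definition has_elimination_ordering :: "nat \<Rightarrow> nat \<Rightarrow> (nat \<Rightarrow> nat \<Rightarrow> real) \<Rightarrow> bool" where
  "has_elimination_ordering m n A \<longleftrightarrow> (\<exists>js. elimination_ordering m n A js)"

end

theory Submission
  imports Defs
begin

definition Aex :: "nat \<Rightarrow> nat \<Rightarrow> real" where
  "Aex i j = (if i=1 \<and> j=1 then -1 else if i=1 \<and> j=2 then -1 else
     if i=2 \<and> j=1 then -1 else if i=2 \<and> j=2 then 1 else
     if i=3 \<and> j=1 then 1 else if i=3 \<and> j=3 then -1 else
     if i=4 \<and> (j=1 \<or> j=3) then 1 else 0)"

lemma sum3:
  fixes f :: "nat \<Rightarrow> real" and n :: nat
  assumes "n \<ge> 3" "\<And>j. j \<notin> {1,2,3} \<Longrightarrow> f j = 0"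
  shows "(\<Sum>j=1..n. f j) = f 1 + f 2 + (f 3 :: real)"
proof -
  have "(\<Sum>j=1..n. f j) = (\<Sum>j\<in>{1,2,3}. f j)"
    by (rule sum.mono_neutral_right) (use assms in auto)
  also have "\<dots> = f 1 + f 2 + f 3" by simp
  finally show ?thesis .
qed

lemma rowsum:
  assumes "n \<ge> 3"
  shows "(\<Sum>j=1..n. Aex i j * of_int (x j)) =
    (if i = 1 then - of_int (x 1) - of_int (x 2)
     else if i = 2 then - of_int (x 1) + of_int (x 2)
     else if i = 3 then of_int (x 1) - of_int (x 3)
     else if i = 4 then of_int (x 1) + of_int (x 3) else 0)"
  by (subst sum3[OF assms]) (auto simp: Aex_def)

lemma feas_iff:
  assumes "n \<ge> 3" "m \<ge> 4"
  shows "x \<in> feasible_set d m n Aex b \<longleftrightarrow> x \<in> box d n \<and>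
    b 1 \<le> - of_int (x 1) - of_int (x 2) \<and> b 2 \<le> - of_int (x 1) + of_int (x 2) \<and>
    b 3 \<le> of_int (x 1) - of_int (x 3) \<and> b 4 \<le> of_int (x 1) + of_int (x 3) \<and>
    (\<forall>i\<in>{5..m}. b i \<le> 0)"
proof -
  have "(\<forall>i\<in>{1..m}. (\<Sum>j=1..n. Aex i j * of_int (x j)) \<ge> b i) \<longleftrightarrow>
    b 1 \<le> - of_int (x 1) - of_int (x 2) \<and> b 2 \<le> - of_int (x 1) + of_int (x 2) \<and>
    b 3 \<le> of_int (x 1) - of_int (x 3) \<and> b 4 \<le> of_int (x 1) + of_int (x 3) \<and>
    (\<forall>i\<in>{5..m}. b i \<le> 0)" (is "?L \<longleftrightarrow> ?R")
  proof
    assume L: ?L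
    have "1 \<in> {1..m}" "2 \<in> {1..m}" "3 \<in> {1..m}" "4 \<in> {1..m}" using assms by auto
    have L': "\<forall>i\<in>{1..m}. b i \<le> (if i = 1 then - of_int (x 1) - of_int (x 2)
     else if i = 2 then - of_int (x 1) + of_int (x 2)
     else if i = 3 then of_int (x 1) - of_int (x 3)
     else if i = 4 then of_int (x 1) + of_int (x 3) else (0::real))"
      using L by (simp only: rowsum[OF assms(1)])
    show ?R
    proof (intro conjI)
      show "b 1 \<le> - of_int (x 1) - of_int (x 2)" using bspec[OF L' \<open>1 \<in> {1..m}\<close>] by simp
      show "b 2 \<le> - of_int (x 1) + of_int (x 2)" using bspec[OF L' \<open>2 \<in> {1..m}\<close>] by simp
      show "b 3 \<le> of_int (x 1) - of_int (x 3)" using bspec[OF L' \<open>3 \<in> {1..m}\<close>] by simp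
      show "b 4 \<le> of_int (x 1) + of_int (x 3)" using bspec[OF L' \<open>4 \<in> {1..m}\<close>] by simp
      show "\<forall>i\<in>{5..m}. b i \<le> 0"
      proof
        fix i assume i: "i \<in> {5..m}"
        then have "i \<in> {1..m}" by auto
        from bspec[OF L' this] i show "b i \<le> 0" by auto
      qed
    qed
  next
    assume R: ?R
    show ?L
    proof
      fix i assume i: "i \<in> {1..m}"
      consider "i = 1" | "i = 2" | "i = 3" | "i = 4" | "i \<in> {5..m}" using i by fastforce
      then show "(\<Sum>j=1..n. Aex i j * of_int (x j)) \<ge> b i"
        unfolding rowsum[OF assms(1)] using R by cases auto
    qed
  qed
  then show ?thesis unfolding feasible_set_def by auto
qed

lemma my_sym_rtranclp:
  assumes "\<And>u v. r u v \<Longrightarrow> r v u" "r\<^sup>*\<^sup>* a b"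
  shows "r\<^sup>*\<^sup>* b a"
  using assms(2)
proof induction
  case base then show ?case by simp
next
  case (step y z)
  then show ?case using assms(1) by (meson converse_rtranclp_into_rtranclp)
qed

lemma one_step:
  assumes "u \<in> R" "v \<in> R" "\<And>k. k \<noteq> j \<Longrightarrow> u k = v k" "j \<in> {1..n}"
  shows "(\<lambda>u v. u \<in> R \<and> v \<in> R \<and> hamming_adj n u v)\<^sup>*\<^sup>* u v"
proof (cases "u j = v j")
  case True
  then have "u = v" by (intro ext) (metis assms(3))
  then show ?thesis by simp
next
  case False
  have "{k \<in> {1..n}. u k \<noteq> v k} = {j}" using False assms(3,4) by auto
  then have "hamming_adj n u v" unfolding hamming_adj_def by simp
  then show ?thesis using assms by auto
qed

lemma agree_conn:
  assumes n3: "n \<ge> 3" and m4: "m \<ge> 4"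
  shows "\<forall>u v. card {k \<in> {1..n}. u k \<noteq> v k} = N \<longrightarrow>
     u \<in> feasible_set d m n Aex b \<longrightarrow> v \<in> feasible_set d m n Aex b \<longrightarrow>
     u 1 = v 1 \<longrightarrow> u 2 = v 2 \<longrightarrow> u 3 = v 3 \<longrightarrow>
     (\<lambda>u v. u \<in> feasible_set d m n Aex b \<and> v \<in> feasible_set d m n Aex b \<and> hamming_adj n u v)\<^sup>*\<^sup>* u v"
proof (induction N rule: less_induct)
  case (less N)
  show ?case
  proof (intro allI impI)
    fix u v
    let ?R = "feasible_set d m n Aex b"
    assume c: "card {k \<in> {1..n}. u k \<noteq> v k} = N" and u: "u \<in> ?R" and v: "v \<in> ?R"
      and a1: "u 1 = v 1" and a2: "u 2 = v 2" and a3: "u 3 = v 3"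
    show "(\<lambda>u v. u \<in> ?R \<and> v \<in> ?R \<and> hamming_adj n u v)\<^sup>*\<^sup>* u v"
    proof (cases "{k \<in> {1..n}. u k \<noteq> v k} = {}")
      case True
      have "u = v"
      proof
        fix k
        show "u k = v k"
        proof (cases "k \<in> {1..n}")
          case True then show ?thesis using \<open>{k \<in> {1..n}. u k \<noteq> v k} = {}\<close> by auto
        next
          case False then show ?thesis using u v
            unfolding feasible_set_def box_def by auto
        qed
      qed
      then show ?thesis by simp
    next
      case False
      then obtain j where j: "j \<in> {1..n}" "u j \<noteq> v j" by auto
      have j3: "j \<notin> {1,2,3}" using j a1 a2 a3 by auto
      define w where "w = u(j := v j)"
      have wbox: "w \<in> box d n" using u v j unfolding w_def feasible_set_def box_def by auto
      have w: "w \<in> ?R" using u wbox j3 unfolding feas_iff[OF n3 m4] w_def by auto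
      have "{k \<in> {1..n}. w k \<noteq> v k} \<subset> {k \<in> {1..n}. u k \<noteq> v k}"
        using j unfolding w_def by auto
      then have lt: "card {k \<in> {1..n}. w k \<noteq> v k} < N"
        using c psubset_card_mono[of "{k \<in> {1..n}. u k \<noteq> v k}"] by simp
      have "w 1 = v 1" "w 2 = v 2" "w 3 = v 3" using a1 a2 a3 j3 unfolding w_def by auto
      then have "(\<lambda>u v. u \<in> ?R \<and> v \<in> ?R \<and> hamming_adj n u v)\<^sup>*\<^sup>* w v"
        using less.IH[OF lt, rule_format, OF refl w v] by blast
      moreover have "(\<lambda>u v. u \<in> ?R \<and> v \<in> ?R \<and> hamming_adj n u v)\<^sup>*\<^sup>* u w"
        by (rule one_step[OF u w _ j(1)]) (simp add: w_def)
      ultimately show ?thesis by (meson rtranclp_trans)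
    qed
  qed
qed

lemma conn_le:
  assumes n3: "n \<ge> 3" and m4: "m \<ge> 4"
    and x: "x \<in> feasible_set d m n Aex b" and y: "y \<in> feasible_set d m n Aex b"
    and le: "x 1 \<le> y 1"
  shows "(\<lambda>u v. u \<in> feasible_set d m n Aex b \<and> v \<in> feasible_set d m n Aex b \<and> hamming_adj n u v)\<^sup>*\<^sup>* x y"
proof -
  let ?R = "feasible_set d m n Aex b"
  let ?r = "\<lambda>u v. u \<in> ?R \<and> v \<in> ?R \<and> hamming_adj n u v"
  have xb: "x \<in> box d n" and yb: "y \<in> box d n" using x y unfolding feasible_set_def by auto
  have j1: "1 \<in> {1..n}" and j2: "2 \<in> {1..n}" and j3: "3 \<in> {1..n}" using n3 by auto
  have xr: "y 1 \<ge> 0" "y 1 \<le> int d" "y 2 \<ge> 0" "y 2 \<le> int d" "y 3 \<ge> 0" "y 3 \<le> int d"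
    using yb j1 j2 j3 unfolding box_def by auto
  define z1 where "z1 = x(2 := y 2)"
  define z2 where "z2 = z1(1 := y 1)"
  define w where "w = z2(3 := y 3)"
  have boxupd: "\<And>z j c. z \<in> box d n \<Longrightarrow> j \<in> {1..n} \<Longrightarrow> 0 \<le> c \<Longrightarrow> c \<le> int d \<Longrightarrow> z(j := c) \<in> box d n"
    unfolding box_def by auto
  have bz1: "z1 \<in> box d n" unfolding z1_def using boxupd[OF xb j2] xr by simp
  have bz2: "z2 \<in> box d n" unfolding z2_def using boxupd[OF bz1 j1] xr by simp
  have bw: "w \<in> box d n" unfolding w_def using boxupd[OF bz2 j3] xr by simp
  note F = feas_iff[OF n3 m4]
  have le': "real_of_int (x 1) \<le> real_of_int (y 1)" using le by simp
  have X: "b 1 \<le> - of_int (x 1) - of_int (x 2)" "b 2 \<le> - of_int (x 1) + of_int (x 2)"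
    "b 3 \<le> of_int (x 1) - of_int (x 3)" "b 4 \<le> of_int (x 1) + of_int (x 3)"
    "\<forall>i\<in>{5..m}. b i \<le> 0" using x unfolding F by auto
  have Y: "b 1 \<le> - of_int (y 1) - of_int (y 2)" "b 2 \<le> - of_int (y 1) + of_int (y 2)"
    "b 3 \<le> of_int (y 1) - of_int (y 3)" "b 4 \<le> of_int (y 1) + of_int (y 3)"
    using y unfolding F by auto
  have v1: "z1 1 = x 1" "z1 2 = y 2" "z1 3 = x 3" unfolding z1_def by auto
  have v2: "z2 1 = y 1" "z2 2 = y 2" "z2 3 = x 3" unfolding z2_def z1_def by auto
  have v3: "w 1 = y 1" "w 2 = y 2" "w 3 = y 3" unfolding w_def z2_def z1_def by auto
  have R1: "z1 \<in> ?R" unfolding F v1 using bz1 X Y le' by simp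
  have R2: "z2 \<in> ?R" unfolding F v2 using bz2 X Y le' by simp
  have R3: "w \<in> ?R" unfolding F v3 using bw X Y le' by simp
  have s1: "?r\<^sup>*\<^sup>* x z1" by (rule one_step[OF x R1 _ j2]) (simp add: z1_def)
  have s2: "?r\<^sup>*\<^sup>* z1 z2" by (rule one_step[OF R1 R2 _ j1]) (simp add: z2_def)
  have s3: "?r\<^sup>*\<^sup>* z2 w" by (rule one_step[OF R2 R3 _ j3]) (simp add: w_def)
  have s4: "?r\<^sup>*\<^sup>* w y"
    using agree_conn[OF n3 m4, rule_format, OF refl R3 y v3] .
  show ?thesis using s1 s2 s3 s4 by (meson rtranclp_trans)
qed

lemma connected_all:
  assumes n3: "n \<ge> 3" and m4: "m \<ge> 4"
  shows "solution_graph_connected n (feasible_set d m n Aex b)"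
  unfolding solution_graph_connected_def
proof (intro ballI)
  let ?R = "feasible_set d m n Aex b"
  let ?r = "\<lambda>u v. u \<in> ?R \<and> v \<in> ?R \<and> hamming_adj n u v"
  have symr: "?r v u" if "?r u v" for u v
  proof -
    have "{j \<in> {1..n}. u j \<noteq> v j} = {j \<in> {1..n}. v j \<noteq> u j}" by auto
    then show ?thesis using that unfolding hamming_adj_def by simp
  qed
  fix x y assume x: "x \<in> ?R" and y: "y \<in> ?R"
  show "?r\<^sup>*\<^sup>* x y"
  proof (cases "x 1 \<le> y 1")
    case True
    then show ?thesis by (rule conn_le[OF n3 m4 x y])
  next
    case False
    then have "?r\<^sup>*\<^sup>* y x" using conn_le[OF n3 m4 y x] by simp
    then show ?thesis using my_sym_rtranclp[of ?r, OF symr] by blast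
  qed
qed

lemma not_ce:
  assumes "ia \<in> {1..m}" "A ia j > 0" "ja \<in> J - {j}" "A ia ja \<noteq> 0"
    "ib \<in> {1..m}" "A ib j < 0" "jb \<in> J - {j}" "A ib jb \<noteq> 0"
  shows "\<not> can_eliminate m A J j"
  using assms unfolding can_eliminate_def by blast

lemma no_eo:
  fixes m n :: nat
  assumes n3: "n \<ge> 3" and m4: "m \<ge> 4"
  shows "\<not> has_elimination_ordering m n Aex"
proof
  assume "has_elimination_ordering m n Aex"
  then obtain js where eo: "elimination_ordering m n Aex js"
    unfolding has_elimination_ordering_def by auto
  have dj: "distinct js" and sj: "set js = {1..n}"
    and ce: "\<And>t. t < n \<Longrightarrow> can_eliminate m Aex ({1..n} - set (take t js)) (js ! t)"
    using eo unfolding elimination_ordering_def by auto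
  have len: "length js = n" using distinct_card[OF dj] sj by simp
  let ?P = "\<lambda>t. t < length js \<and> js ! t \<in> {1,2,3}"
  have "1 \<in> set js" using sj n3 by auto
  then obtain t1 where "?P t1" by (auto simp: in_set_conv_nth)
  define t where "t = (LEAST t. ?P t)"
  have Pt: "?P t" unfolding t_def by (rule LeastI) fact
  have notP: "\<And>k. k < t \<Longrightarrow> \<not> ?P k" unfolding t_def using not_less_Least by blast
  have "\<And>c::nat. c \<in> {1,2,3} \<Longrightarrow> c \<notin> set (take t js)"
  proof
    fix c assume c: "c \<in> {1,2,3::nat}" "c \<in> set (take t js)"
    then obtain k where "k < length (take t js)" "take t js ! k = c" by (auto simp: in_set_conv_nth)
    then show False using notP[of k] c(1) by auto
  qed
  then have sub: "{1,2,3} \<subseteq> {1..n} - set (take t js)" using n3 by auto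
  have tn: "t < n" using Pt len by simp
  have rows: "(1::nat) \<in> {1..m}" "(2::nat) \<in> {1..m}" "(3::nat) \<in> {1..m}" "(4::nat) \<in> {1..m}"
    using m4 by auto
  have "\<not> can_eliminate m Aex ({1..n} - set (take t js)) (js ! t)"
  proof -
    consider "js ! t = 1" | "js ! t = 2" | "js ! t = 3" using Pt by auto
    then show ?thesis
    proof cases
      case 1
      show ?thesis by (rule not_ce[where ia=3 and ja=3 and ib=1 and jb=2])
        (use 1 sub m4 in \<open>auto simp: Aex_def rows\<close>)
    next
      case 2
      show ?thesis by (rule not_ce[where ia=2 and ja=1 and ib=1 and jb=1])
        (use 2 sub m4 in \<open>auto simp: Aex_def rows\<close>)
    next
      case 3
      show ?thesis by (rule not_ce[where ia=4 and ja=1 and ib=3 and jb=1])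
        (use 3 sub m4 in \<open>auto simp: Aex_def rows\<close>)
    qed
  qed
  then show False using ce[OF tn] by simp
qed

theorem theorem1:
  fixes m n d :: nat
  assumes "m \<ge> 4" and "n \<ge> 3" and "d \<ge> 1"
  shows "\<exists>A :: nat \<Rightarrow> nat \<Rightarrow> real.
           \<not> has_elimination_ordering m n A \<and>
           (\<forall>b :: nat \<Rightarrow> real. solution_graph_connected n (feasible_set d m n A b))"
  using no_eo[OF assms(2,1)] connected_all[OF assms(2,1)] by blast

end
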